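(* Let $\langle M,\mathsf{S}\rangle$ be a sum structure with $M\neq\emptyset$. Then the relation $\sqsubseteq_{\mathsf{S}}$ satisfies the parthood axioms (P1)–(P5), i.e. $\langle M,\sqsubseteq_{\mathsf{S}}\rangle$ is a mereological structure.
   Context: For a set $M$ and a relation $\mathsf{S}\subseteq M\times\mathcal{P}(M)$ define: $x\sqsubseteq_{\mathsf{S}} y$ iff there is $X\subseteq M$ with $y\,\mathsf{S}\,X$ and $x\in X$; $\mathrm{I}(x)=\{y\in M\mid y\sqsubseteq_{\mathsf{S}} x\}$ and for $A\subseteq M$, $\mathrm{I}(A)=\bigcup_{a\in A}\mathrm{I}(a)$; $x$ s-overlaps $y$ iff there are $X,Y\subseteq M$ with $x\,\mathsf{S}\,X$, $y\,\mathsf{S}\,Y$, $X\cap Y\neq\emptyset$; a set $A\subseteq M$ is pre-dense in $B\subseteq M$ iff for every $b\in B$ there is $a\in A$ such that $a$ s-overlaps $b$. A sum structure is a pair $\langle M,\mathsf{S}\rangle$ satisfying: (S1) for every non-empty $X\subseteq M$ there is $x\in M$ with $x\,\mathsf{S}\,X$; (S2) $x\,\mathsf{S}\,X\wedge y\,\mathsf{S}\,X\to x=y$; (S3) $x\,\mathsf{S}\,X\wedge y\,\mathsf{S}\,Y\wedge x\in Y\to y\,\mathsf{S}\,(X\cup Y)$; (S4) if $x\,\mathsf{S}\,X$, $x\,\mathsf{S}\,Y$ and $y\in Y$, then there are $z\in X$ and $Z,U\subseteq M$ with $z\,\mathsf{S}\,Z$, $y\,\mathsf{S}\,U$ and $Z\cap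 U\neq\emptyset$; (S5) for all $x\in M$ and $X\subseteq M$: if $X$ is pre-dense in $\mathrm{I}(x)$ then $x\,\mathsf{S}\,(\mathrm{I}(x)\cap\mathrm{I}(X))$. A mereological structure is a pair $\langle M,\sqsubseteq\rangle$ where $M$ is a non-empty set and $\sqsubseteq\subseteq M\times M$ satisfies, for all $x,y,z\in M$: (P1) $x\sqsubseteq x$; (P2) $x\sqsubseteq y\wedge y\sqsubseteq x\to x=y$; (P3) $x\sqsubseteq y\wedge y\sqsubseteq z\to x\sqsubseteq z$; (P4) if $x\not\sqsubseteq y$ then there is $z\in M$ with $z\sqsubseteq x$ such that there is no $u\in M$ with $u\sqsubseteq z$ and $u\sqsubseteq y$; (P5) for every non-empty $X\subseteq M$ there is $x\in M$ such that every $y\in X$ satisfies $y\sqsubseteq x$, and for every $a\in M$ with $a\sqsubseteq x$ there exist $y\in X$ and $z\in M$ with $z\sqsubseteq y$ and $z\sqsubseteq a$. *)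

theory Defs
  imports Main
begin

definition sum_rel :: "'a set \<Rightarrow> ('a \<Rightarrow> 'a set \<Rightarrow> bool) \<Rightarrow> bool" where
  "sum_rel M S \<longleftrightarrow> (\<forall>x X. S x X \<longrightarrow> x \<in> M \<and> X \<subseteq> M)"

definition sqleS :: "'a set \<Rightarrow> ('a \<Rightarrow> 'a set \<Rightarrow> bool) \<Rightarrow> 'a \<Rightarrow> 'a \<Rightarrow> bool" where
  "sqleS M S x y \<longleftrightarrow> (\<exists>X. X \<subseteq> M \<and> S y X \<and> x \<in> X)"

definition I_el :: "'a set \<Rightarrow> ('a \<Rightarrow> 'a set \<Rightarrow> bool) \<Rightarrow> 'a \<Rightarrow> 'a set" where
  "I_el M S x = {y \<in> M. sqleS M S y x}"

definition I_set :: "'a set \<Rightarrow> ('a \<Rightarrow> 'a set \<Rightarrow> bool) \<Rightarrow> 'a set \<Rightarrow> 'a set" where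
  "I_set M S A = (\<Union>a\<in>A. I_el M S a)"

definition s_overlaps :: "'a set \<Rightarrow> ('a \<Rightarrow> 'a set \<Rightarrow> bool) \<Rightarrow> 'a \<Rightarrow> 'a \<Rightarrow> bool" where
  "s_overlaps M S x y \<longleftrightarrow>
     (\<exists>X Y. X \<subseteq> M \<and> Y \<subseteq> M \<and> S x X \<and> S y Y \<and> X \<inter> Y \<noteq> {})"

definition pre_dense :: "'a set \<Rightarrow> ('a \<Rightarrow> 'a set \<Rightarrow> bool) \<Rightarrow> 'a set \<Rightarrow> 'a set \<Rightarrow> bool" where
  "pre_dense M S A B \<longleftrightarrow> (\<forall>b\<in>B. \<exists>a\<in>A. s_overlaps M S a b)"

definition sum_structure :: "'a set \<Rightarrow> ('a \<Rightarrow> 'a set \<Rightarrow> bool) \<Rightarrow> bool" where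
  "sum_structure M S \<longleftrightarrow>
     sum_rel M S \<and>
     (\<forall>X. X \<subseteq> M \<and> X \<noteq> {} \<longrightarrow> (\<exists>x\<in>M. S x X)) \<and>
     (\<forall>x\<in>M. \<forall>y\<in>M. \<forall>X. X \<subseteq> M \<longrightarrow> S x X \<and> S y X \<longrightarrow> x = y) \<and>
     (\<forall>x\<in>M. \<forall>y\<in>M. \<forall>X Y. X \<subseteq> M \<and> Y \<subseteq> M \<longrightarrow>
        S x X \<and> S y Y \<and> x \<in> Y \<longrightarrow> S y (X \<union> Y)) \<and>
     (\<forall>x\<in>M. \<forall>y\<in>M. \<forall>X Y. X \<subseteq> M \<and> Y \<subseteq> M \<longrightarrow>
        S x X \<and> S x Y \<and> y \<in> Y \<longrightarrow>
        (\<exists>z\<in>X. \<exists>Z U. Z \<subseteq> M \<and> U \<subseteq> M \<and> S z Z \<and> S y U \<and> Z \<inter> U \<noteq> {})) \<and>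
     (\<forall>x\<in>M. \<forall>X. X \<subseteq> M \<longrightarrow>
        pre_dense M S X (I_el M S x) \<longrightarrow> S x (I_el M S x \<inter> I_set M S X))"

definition mereological_structure :: "'a set \<Rightarrow> ('a \<Rightarrow> 'a \<Rightarrow> bool) \<Rightarrow> bool" where
  "mereological_structure M P \<longleftrightarrow>
     M \<noteq> {} \<and>
     (\<forall>x\<in>M. P x x) \<and>
     (\<forall>x\<in>M. \<forall>y\<in>M. P x y \<and> P y x \<longrightarrow> x = y) \<and>
     (\<forall>x\<in>M. \<forall>y\<in>M. \<forall>z\<in>M. P x y \<and> P y z \<longrightarrow> P x z) \<and>
     (\<forall>x\<in>M. \<forall>y\<in>M. \<not> P x y \<longrightarrow>
        (\<exists>z\<in>M. P z x \<and> \<not> (\<exists>u\<in>M. P u z \<and> P u y))) \<and>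
     (\<forall>X. X \<subseteq> M \<and> X \<noteq> {} \<longrightarrow>
        (\<exists>x\<in>M. (\<forall>y\<in>X. P y x) \<and>
           (\<forall>a\<in>M. P a x \<longrightarrow> (\<exists>y\<in>X. \<exists>z\<in>M. P z y \<and> P z a))))"

end

theory Submission
  imports Defs
begin

locale ss =
  fixes M :: "'a set" and S :: "'a \<Rightarrow> 'a set \<Rightarrow> bool"
  assumes ss: "sum_structure M S"
begin

abbreviation le where "le \<equiv> sqleS M S"

lemmas D = ss[unfolded sum_structure_def]
lemmas R0 = D[THEN conjunct1]
lemmas A1 = D[THEN conjunct2, THEN conjunct1]
lemmas A2 = D[THEN conjunct2, THEN conjunct2, THEN conjunct1]
lemmas A3 = D[THEN conjunct2, THEN conjunct2, THEN conjunct2, THEN conjunct1]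
lemmas A4 = D[THEN conjunct2, THEN conjunct2, THEN conjunct2, THEN conjunct2, THEN conjunct1]
lemmas A5 = D[THEN conjunct2, THEN conjunct2, THEN conjunct2, THEN conjunct2, THEN conjunct2]

lemma rel: "S x X \<Longrightarrow> x \<in> M \<and> X \<subseteq> M"
  using R0 unfolding sum_rel_def by blast

lemma S1: "X \<subseteq> M \<Longrightarrow> X \<noteq> {} \<Longrightarrow> \<exists>x\<in>M. S x X"
  using A1 by blast

lemma S2: "S x X \<Longrightarrow> S y X \<Longrightarrow> x = y"
proof -
  assume a: "S x X" "S y X"
  have "x \<in> M" "y \<in> M" "X \<subseteq> M" using rel[OF a(1)] rel[OF a(2)] by auto
  thus ?thesis using a A2[rule_format, of x y X] by simp
qed

lemma S3: "S x X \<Longrightarrow> S y Y \<Longrightarrow> x \<in> Y \<Longrightarrow> S y (X \<union> Y)"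
proof -
  assume a: "S x X" "S y Y" "x \<in> Y"
  have "x \<in> M" "y \<in> M" "X \<subseteq> M" "Y \<subseteq> M" using rel[OF a(1)] rel[OF a(2)] by auto
  thus ?thesis using a A3[rule_format, of x y X Y] by simp
qed

lemma S4: "S x X \<Longrightarrow> S x Y \<Longrightarrow> y \<in> Y \<Longrightarrow>
    \<exists>z\<in>X. \<exists>Z U. S z Z \<and> S y U \<and> Z \<inter> U \<noteq> {}"
proof -
  assume a: "S x X" "S x Y" "y \<in> Y"
  have "x \<in> M" "y \<in> M" "X \<subseteq> M" "Y \<subseteq> M" using rel[OF a(1)] rel[OF a(2)] a(3) by auto
  hence "\<exists>z\<in>X. \<exists>Z U. Z \<subseteq> M \<and> U \<subseteq> M \<and> S z Z \<and> S y U \<and> Z \<inter> U \<noteq> {}"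
    using a A4[rule_format, of x y X Y] by simp
  thus ?thesis by blast
qed

lemma S5: "x \<in> M \<Longrightarrow> X \<subseteq> M \<Longrightarrow> pre_dense M S X (I_el M S x) \<Longrightarrow>
   S x (I_el M S x \<inter> I_set M S X)"
  using A5[rule_format, of x X] by simp

lemma le_def': "le x y \<longleftrightarrow> (\<exists>X. S y X \<and> x \<in> X)"
  unfolding sqleS_def using rel by blast

lemma le_M: "le x y \<Longrightarrow> x \<in> M \<and> y \<in> M"
  unfolding le_def' using rel by blast

lemma Iel: "I_el M S x = {y. le y x}"
  unfolding I_el_def using le_M by blast

lemma trans: "le x y \<Longrightarrow> le y z \<Longrightarrow> le x z"
  unfolding le_def' using S3 by blast

lemma S4': "S x X \<Longrightarrow> le b x \<Longrightarrow> \<exists>z\<in>X. \<exists>u. le u z \<and> le u b"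
proof -
  assume a: "S x X" "le b x"
  then obtain Y where "S x Y" "b \<in> Y" unfolding le_def' by blast
  from S4[OF a(1) this] obtain z Z U where "z \<in> X" "S z Z" "S b U" "Z \<inter> U \<noteq> {}" by blast
  then show ?thesis unfolding le_def' by blast
qed

lemma ov: "s_overlaps M S a b \<longleftrightarrow> (\<exists>u. le u a \<and> le u b)"
  unfolding s_overlaps_def le_def' using rel by blast

lemma sumI: "x \<in> M \<Longrightarrow> S x (I_el M S x)"
proof -
  assume xM: "x \<in> M"
  have "pre_dense M S {x} (I_el M S x)"
    unfolding pre_dense_def
  proof
    fix b assume "b \<in> I_el M S x"
    hence "le b x" by (simp add: Iel)
    then obtain Y where Y: "S x Y" "b \<in> Y" unfolding le_def' by blast
    from S4'[OF Y(1) \<open>le b x\<close>] obtain z u where "le u b" by blast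
    then obtain U where U: "S b U" "u \<in> U" unfolding le_def' by blast
    have "S x (U \<union> Y)" using S3[OF U(1) Y] .
    hence "le u x" unfolding le_def' using U(2) by blast
    hence "s_overlaps M S x b" unfolding ov using \<open>le u b\<close> by blast
    thus "\<exists>a\<in>{x}. s_overlaps M S a b" by blast
  qed
  from S5[OF xM _ this] xM show ?thesis
    unfolding I_set_def by simp
qed

lemma refl: "x \<in> M \<Longrightarrow> le x x"
proof -
  assume xM: "x \<in> M"
  obtain w where w: "w \<in> M" "S w {x}" using S1[of "{x}"] xM by blast
  have xw: "le x w" using w unfolding le_def' by blast
  have "pre_dense M S {x} (I_el M S w)"
    unfolding pre_dense_def
  proof
    fix b assume "b \<in> I_el M S w"
    hence "le b w" by (simp add: Iel)
    from S4'[OF w(2) this] obtain u where "le u x" "le u b" by blast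
    hence "s_overlaps M S x b" unfolding ov by blast
    thus "\<exists>a\<in>{x}. s_overlaps M S a b" by blast
  qed
  from S5[OF w(1) _ this] xM have "S w (I_el M S w \<inter> I_el M S x)"
    unfolding I_set_def by simp
  moreover have "I_el M S x \<subseteq> I_el M S w" using xw trans by (auto simp: Iel)
  ultimately have "S w (I_el M S x)" by (simp add: Int_absorb1)
  with sumI[OF xM] have "w = x" using S2 by blast
  with w xw show ?thesis by simp
qed

lemma antisym: "le x y \<Longrightarrow> le y x \<Longrightarrow> x = y"
proof -
  assume a: "le x y" "le y x"
  hence "I_el M S x = I_el M S y" using trans by (auto simp: Iel)
  moreover have "S x (I_el M S x)" "S y (I_el M S y)" using sumI le_M a by auto
  ultimately show ?thesis using S2 by metis
qed

lemma P4: "x \<in> M \<Longrightarrow> y \<in> M \<Longrightarrow> \<not> le x y \<Longrightarrow> \<exists>z\<in>M. le z x \<and> \<not> (\<exists>u\<in>M. le u z \<and> le u y)"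
proof (rule ccontr)
  assume xM: "x \<in> M" and yM: "y \<in> M" and nxy: "\<not> le x y"
    and c: "\<not> (\<exists>z\<in>M. le z x \<and> \<not> (\<exists>u\<in>M. le u z \<and> le u y))"
  have H: "\<And>z. le z x \<Longrightarrow> \<exists>u. le u z \<and> le u y" using c le_M by blast
  obtain v where v: "v \<in> M" "S v {x, y}" using S1[of "{x,y}"] xM yM by blast
  have xv: "le x v" and yv: "le y v" using v unfolding le_def' by blast+
  have "pre_dense M S {y} (I_el M S v)"
    unfolding pre_dense_def
  proof
    fix b assume "b \<in> I_el M S v"
    hence "le b v" by (simp add: Iel)
    from S4'[OF v(2) this] obtain z u where z: "z \<in> {x,y}" "le u z" "le u b" by blast
    have "\<exists>t. le t y \<and> le t b"
    proof (cases "z = y")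
      case True thus ?thesis using z by blast
    next
      case False
      hence "z = x" using z by blast
      with z have "le u x" by simp
      from H[OF this] obtain t where "le t u" "le t y" by blast
      thus ?thesis using trans z(3) by blast
    qed
    hence "s_overlaps M S y b" unfolding ov by blast
    thus "\<exists>a\<in>{y}. s_overlaps M S a b" by blast
  qed
  from S5[OF v(1) _ this] yM have "S v (I_el M S v \<inter> I_el M S y)"
    unfolding I_set_def by simp
  moreover have "I_el M S y \<subseteq> I_el M S v" using yv trans by (auto simp: Iel)
  ultimately have "S v (I_el M S y)" by (simp add: Int_absorb1)
  with sumI[OF yM] have "v = y" using S2 by blast
  with xv nxy show False by simp
qed

lemma P5: "X \<subseteq> M \<Longrightarrow> X \<noteq> {} \<Longrightarrow>
  (\<exists>x\<in>M. (\<forall>y\<in>X. le y x) \<and> (\<forall>a\<in>M. le a x \<longrightarrow> (\<exists>y\<in>X. \<exists>z\<in>M. le z y \<and> le z a)))"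
proof -
  assume "X \<subseteq> M" "X \<noteq> {}"
  then obtain x where x: "x \<in> M" "S x X" using S1 by blast
  have "\<forall>y\<in>X. le y x" using x unfolding le_def' by blast
  moreover have "\<forall>a\<in>M. le a x \<longrightarrow> (\<exists>y\<in>X. \<exists>z\<in>M. le z y \<and> le z a)"
    using S4'[OF x(2)] le_M by blast
  ultimately show ?thesis using x by blast
qed

end

theorem theorem3p13:
  fixes M :: "'a set" and S :: "'a \<Rightarrow> 'a set \<Rightarrow> bool"
  assumes "sum_structure M S"
    and "M \<noteq> {}"
  shows "mereological_structure M (sqleS M S)"
proof -
  interpret ss M S by (rule ss.intro, fact)
  have t: "\<forall>x\<in>M. \<forall>y\<in>M. \<forall>z\<in>M. sqleS M S x y \<and> sqleS M S y z \<longrightarrow> sqleS M S x z"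
    using trans by blast
  have a: "\<forall>x\<in>M. \<forall>y\<in>M. sqleS M S x y \<and> sqleS M S y x \<longrightarrow> x = y"
    using antisym by blast
  have r: "\<forall>x\<in>M. sqleS M S x x" using refl by blast
  have p4: "\<forall>x\<in>M. \<forall>y\<in>M. \<not> sqleS M S x y \<longrightarrow>
        (\<exists>z\<in>M. sqleS M S z x \<and> \<not> (\<exists>u\<in>M. sqleS M S u z \<and> sqleS M S u y))"
    using P4 by blast
  have p5: "\<forall>X. X \<subseteq> M \<and> X \<noteq> {} \<longrightarrow>
        (\<exists>x\<in>M. (\<forall>y\<in>X. sqleS M S y x) \<and>
           (\<forall>a\<in>M. sqleS M S a x \<longrightarrow> (\<exists>y\<in>X. \<exists>z\<in>M. sqleS M S z y \<and> sqleS M S z a)))"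
    using P5 by blast
  show ?thesis unfolding mereological_structure_def
    using assms(2) t a r p4 p5 by (intro conjI) assumption+
qed

end
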